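(* Consider an infinite-horizon discounted MDP with $V_{\max}=R_{\max}/(1-\gamma)$ whose action space $\mathcal{A}\subset\mathbb{R}^m$ is convex and compact with diameter $B$ and positive finite Lebesgue measure $\nu(\mathcal{A})$; all policies have densities with respect to the Lebesgue measure $\nu$. Let $\mathcal{F}$ be a class of functions $\mathcal{S}\times\mathcal{A}\to[0,V_{\max}]$. Run PSPI for $K$ iterations: $\pi_1(a\mid s)=1/\nu(\mathcal{A})$ for all $s,a$; at iteration $k$ the critic outputs some $f_k\in\mathcal{F}$ (possibly history-dependent) and $\pi_{k+1}(a\mid s)\propto\pi_k(a\mid s)\exp(\eta f_k(s,a))$. Assume $f_k(s,\cdot)$ is $L$-Lipschitz for all $k$ and $s$. Then with step size $\eta=\sqrt{8m\log K/(KV_{\max}^2)}$, for any comparator policy $\pi_{\mathrm{cp}}$, $$\frac{\mathrm{Reg}_K}{K}\le V_{\max}\sqrt{\frac{m\log K}{2K}}+\frac{LB}{K},\qquad \mathrm{Reg}_K=\sum_{k=1}^K\mathbb{E}_{s\sim d^{\pi_{\mathrm{cp}}}}\bigl[f_k(s,\pi_{\mathrm{cp}})-f_k(s,\pi_k)\bigr].$$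
   Context: $d^\pi(s)$ is the state marginal of the discounted occupancy $d^\pi(s,a)=(1-\gamma)\sum_{t\ge0}\gamma^t\Pr_\pi(s_t=s,a_t=a)$; $f(s,\pi)=\mathbb{E}_{a\sim\pi(\cdot|s)}f(s,a)$. Lipschitz continuity and diameter are with respect to the Euclidean norm on $\mathbb{R}^m$. *)

theory Defs
  imports "HOL-Analysis.Analysis" "HOL-Probability.Probability"
begin

text \<open>Policies are densities (w.r.t. Lebesgue measure lborel on real^'m) over actions,
  given as functions pi s a. The expected value f(s,pi) = E_{a ~ pi(.|s)} f(s,a).\<close>

definition pol_val :: "('s \<Rightarrow> 'a::euclidean_space \<Rightarrow> real) \<Rightarrow> ('s \<Rightarrow> 'a \<Rightarrow> real) \<Rightarrow> 's \<Rightarrow> real" where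
  "pol_val f pol s = (LINT a|lborel. pol s a * f s a)"

text \<open>PSPI policies, indexed as in the paper: pspi eta A f 1 = pi_1 (uniform on A),
  pspi eta A f (k+1) proportional to pspi eta A f k * exp(eta * f k).
  (Index 0 is unused; it is set to the uniform density as well.)\<close>

fun pspi :: "real \<Rightarrow> 'a::euclidean_space set \<Rightarrow> (nat \<Rightarrow> 's \<Rightarrow> 'a \<Rightarrow> real) \<Rightarrow> nat \<Rightarrow> 's \<Rightarrow> 'a \<Rightarrow> real" where
  "pspi \<eta> A f 0 = (\<lambda>s a. indicator A a / measure lborel A)"
| "pspi \<eta> A f (Suc 0) = (\<lambda>s a. indicator A a / measure lborel A)"
| "pspi \<eta> A f (Suc (Suc j)) =
     (\<lambda>s a. pspi \<eta> A f (Suc j) s a * exp (\<eta> * f (Suc j) s a) /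
            (LINT b|lborel. pspi \<eta> A f (Suc j) s b * exp (\<eta> * f (Suc j) s b)))"

text \<open>Marginal distribution of s_t under policy pol, initial distribution mu0 and
  transition kernel P (P s a is the distribution of the next state).\<close>

primrec state_dist :: "'s measure \<Rightarrow> ('s \<Rightarrow> 'a::euclidean_space \<Rightarrow> 's measure) \<Rightarrow> ('s \<Rightarrow> 'a \<Rightarrow> real) \<Rightarrow> nat \<Rightarrow> 's measure" where
  "state_dist mu0 P pol 0 = mu0"
| "state_dist mu0 P pol (Suc t) =
     state_dist mu0 P pol t \<bind> (\<lambda>s. density lborel (\<lambda>a. ennreal (pol s a)) \<bind> (\<lambda>a. P s a))"

text \<open>E_{s ~ d^pol}[g s] for the discounted state occupancy
  d^pol = (1-gamma) sum_t gamma^t Pr(s_t = .).\<close>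

definition occ_expect :: "real \<Rightarrow> 's measure \<Rightarrow> ('s \<Rightarrow> 'a::euclidean_space \<Rightarrow> 's measure) \<Rightarrow> ('s \<Rightarrow> 'a \<Rightarrow> real) \<Rightarrow> ('s \<Rightarrow> real) \<Rightarrow> real" where
  "occ_expect \<gamma> mu0 P pol g = (1 - \<gamma>) * (\<Sum>t. \<gamma> ^ t * (\<integral>s. g s \<partial>(state_dist mu0 P pol t)))"

end

theory Submission
  imports Defs
begin


definition SS :: "(nat \<Rightarrow> 's \<Rightarrow> 'a \<Rightarrow> real) \<Rightarrow> 's \<Rightarrow> nat \<Rightarrow> 'a \<Rightarrow> real" where
  "SS f s k a = (\<Sum>j\<in>{1..<k}. f j s a)"

definition WW :: "real \<Rightarrow> 'a set \<Rightarrow> (nat \<Rightarrow> 's \<Rightarrow> 'a \<Rightarrow> real) \<Rightarrow> 's \<Rightarrow> nat \<Rightarrow> 'a \<Rightarrow> real" where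
  "WW \<eta> A f s k a = indicator A a * exp (\<eta> * SS f s k a)"

definition ZZ :: "real \<Rightarrow> 'a::euclidean_space set \<Rightarrow> (nat \<Rightarrow> 's \<Rightarrow> 'a \<Rightarrow> real) \<Rightarrow> 's \<Rightarrow> nat \<Rightarrow> real" where
  "ZZ \<eta> A f s k = (LINT a|lborel. WW \<eta> A f s k a)"

lemma dens_bound:
  fixes w h :: "'a::euclidean_space \<Rightarrow> real"
  assumes wm: "w \<in> borel_measurable lborel" and wnn: "\<And>a. 0 \<le> w a" and wA: "\<And>a. a \<notin> A \<Longrightarrow> w a = 0"
    and wi: "integrable lborel w" and w1: "(LINT a|lborel. w a) = 1"
    and hm: "h \<in> borel_measurable lborel" and hr: "\<And>a. a \<in> A \<Longrightarrow> 0 \<le> h a \<and> h a \<le> V"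
  shows "integrable lborel (\<lambda>a. w a * h a)" "0 \<le> (LINT a|lborel. w a * h a)" "(LINT a|lborel. w a * h a) \<le> V"
proof -
  have pw: "0 \<le> w a * h a \<and> w a * h a \<le> w a * V" for a
  proof (cases "a \<in> A")
    case True then show ?thesis using hr[OF True] wnn[of a] by (auto intro: mult_left_mono)
  qed (simp add: wA)
  show wi2: "integrable lborel (\<lambda>a. w a * h a)"
  proof (rule Bochner_Integration.integrable_bound[of lborel "\<lambda>a. V * w a"])
    show "integrable lborel (\<lambda>a. V * w a)" using wi by simp
    show "(\<lambda>a. w a * h a) \<in> borel_measurable lborel" using wm hm by measurable
    show "AE a in lborel. norm (w a * h a) \<le> norm (V * w a)"
    proof (rule AE_I2)
      fix a have "0 \<le> w a * h a" "w a * h a \<le> w a * V" using pw[of a] by auto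
      then show "norm (w a * h a) \<le> norm (V * w a)" by (simp add: mult.commute)
    qed
  qed
  show "0 \<le> (LINT a|lborel. w a * h a)" using pw by (simp add: Bochner_Integration.integral_nonneg)
  have "(LINT a|lborel. w a * h a) \<le> (LINT a|lborel. w a * V)"
    using pw wi wi2 by (intro integral_mono) auto
  also have "\<dots> = V" using w1 by simp
  finally show "(LINT a|lborel. w a * h a) \<le> V" .
qed

lemma prob_space_density_real:
  fixes w :: "'a::euclidean_space \<Rightarrow> real"
  assumes "w \<in> borel_measurable lborel" "\<And>x. 0 \<le> w x" "integrable lborel w" "(LINT x|lborel. w x) = 1"
  shows "prob_space (density lborel (\<lambda>x. ennreal (w x)))"
proof (rule prob_spaceI)
  have "emeasure (density lborel (\<lambda>x. ennreal (w x))) UNIV = (\<integral>\<^sup>+x. ennreal (w x) \<partial>lborel)"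
    using assms by (simp add: emeasure_density)
  also have "\<dots> = ennreal (LINT x|lborel. w x)"
    using assms by (intro nn_integral_eq_integral) auto
  finally show "emeasure (density lborel (\<lambda>x. ennreal (w x))) (space (density lborel (\<lambda>x. ennreal (w x)))) = 1"
    using assms by simp
qed

context
  fixes \<eta> V L :: real and A :: "(real^'m) set" and f :: "nat \<Rightarrow> 's \<Rightarrow> real^'m \<Rightarrow> real"
    and s :: 's and K :: nat
  assumes eta: "0 \<le> \<eta>" and V: "0 \<le> V"
    and A_convex: "convex A" and A_compact: "compact A"
    and A_pos: "0 < emeasure lborel A" and A_fin: "emeasure lborel A < \<infinity>"
    and hmeas: "\<And>j. j \<in> {1..K} \<Longrightarrow> f j s \<in> borel_measurable lborel"
    and hrng: "\<And>j a. j \<in> {1..K} \<Longrightarrow> a \<in> A \<Longrightarrow> 0 \<le> f j s a \<and> f j s a \<le> V"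
    and hlip: "\<And>j. j \<in> {1..K} \<Longrightarrow> L-lipschitz_on A (f j s)"
begin

lemma A_sets: "A \<in> sets lborel"
  using A_compact by (simp add: compact_imp_closed borel_closed)

lemma muA_pos: "0 < measure lborel A"
  using A_pos A_fin by (simp add: measure_def enn2real_positive_iff)

lemma SS_meas: "k \<le> Suc K \<Longrightarrow> SS f s k \<in> borel_measurable lborel"
  unfolding SS_def
  by (intro borel_measurable_sum) (use hmeas in \<open>auto simp: measurable_ident_sets\<close>)

lemma SS_rng: "k \<le> Suc K \<Longrightarrow> a \<in> A \<Longrightarrow> 0 \<le> SS f s k a \<and> SS f s k a \<le> real K * V"
proof -
  assume k: "k \<le> Suc K" and a: "a \<in> A"
  have "0 \<le> SS f s k a" unfolding SS_def using k a hrng by (intro sum_nonneg) auto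
  moreover have "SS f s k a \<le> (\<Sum>j\<in>{1..<k}. V)" unfolding SS_def using k a hrng by (intro sum_mono) auto
  moreover have "(\<Sum>j\<in>{1..<k}. V) \<le> real K * V" using k V by (simp add: mult_right_mono)
  ultimately show ?thesis by linarith
qed

lemma WW_meas: "k \<le> Suc K \<Longrightarrow> WW \<eta> A f s k \<in> borel_measurable lborel"
  unfolding WW_def[abs_def] using SS_meas A_sets by measurable

lemma WW_bnd: "k \<le> Suc K \<Longrightarrow> indicator A a \<le> WW \<eta> A f s k a \<and> WW \<eta> A f s k a \<le> exp (\<eta> * (real K * V)) * indicator A a"
  using SS_rng[of k a] eta by (auto simp: WW_def indicator_def mult_left_mono)

lemma WW_int: "k \<le> Suc K \<Longrightarrow> integrable lborel (WW \<eta> A f s k)"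
proof -
  assume k: "k \<le> Suc K"
  have "integrable lborel (\<lambda>a. exp (\<eta> * (real K * V)) * indicator A a)"
    using A_fin A_sets by (intro integrable_mult_right integrable_real_indicator) auto
  then show ?thesis
    apply (rule Bochner_Integration.integrable_bound)
    using WW_meas[OF k] WW_bnd[OF k] apply simp
    apply (rule AE_I2)
    subgoal for x using WW_bnd[OF k, of x] by (auto simp: indicator_def)
    done
qed

lemma ZZ_ge: "k \<le> Suc K \<Longrightarrow> measure lborel A \<le> ZZ \<eta> A f s k"
proof -
  assume k: "k \<le> Suc K"
  have "measure lborel A = (LINT a|lborel. indicator A a)"
    using A_fin A_sets by simp
  also have "\<dots> \<le> ZZ \<eta> A f s k" unfolding ZZ_def
    using WW_int[OF k] WW_bnd[OF k] A_fin A_sets by (intro integral_mono) auto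
  finally show ?thesis .
qed

lemma ZZ_pos: "k \<le> Suc K \<Longrightarrow> 0 < ZZ \<eta> A f s k"
  using ZZ_ge muA_pos by fastforce

lemma WW_Suc: "1 \<le> k \<Longrightarrow> WW \<eta> A f s k a * exp (\<eta> * f k s a) = WW \<eta> A f s (Suc k) a"
  by (simp add: WW_def SS_def exp_add[symmetric] distrib_left)

lemma ZZ_1: "ZZ \<eta> A f s 1 = measure lborel A"
  using A_fin A_sets by (simp add: ZZ_def WW_def SS_def)

lemma pspi_closed_aux: "1 \<le> k \<Longrightarrow> k \<le> K \<longrightarrow> pspi \<eta> A f k s = (\<lambda>a. WW \<eta> A f s k a / ZZ \<eta> A f s k)"
proof (induction k rule: nat_induct_at_least)
  case base
  then show ?case using ZZ_1 by (auto simp: WW_def SS_def)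
next
  case (Suc k)
  show ?case proof
  assume kK: "Suc k \<le> K"
  then have IH: "pspi \<eta> A f k s = (\<lambda>a. WW \<eta> A f s k a / ZZ \<eta> A f s k)" using Suc by auto
  from Suc obtain j where j: "k = Suc j" by (cases k) auto
  have Zk: "0 < ZZ \<eta> A f s k" using kK by (intro ZZ_pos) auto
  have "(LINT b|lborel. pspi \<eta> A f k s b * exp (\<eta> * f k s b)) = (LINT b|lborel. WW \<eta> A f s (Suc k) b / ZZ \<eta> A f s k)"
    using Suc by (simp add: IH WW_Suc[symmetric] mult.commute[of _ "inverse _"])
  also have "\<dots> = ZZ \<eta> A f s (Suc k) / ZZ \<eta> A f s k" by (simp add: ZZ_def)
  finally have N: "(LINT b|lborel. pspi \<eta> A f k s b * exp (\<eta> * f k s b)) = ZZ \<eta> A f s (Suc k) / ZZ \<eta> A f s k" .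
  have ZS: "0 < ZZ \<eta> A f s (Suc k)" using kK by (intro ZZ_pos) auto
  have "pspi \<eta> A f (Suc k) s = (\<lambda>a. pspi \<eta> A f k s a * exp (\<eta> * f k s a) / (LINT b|lborel. pspi \<eta> A f k s b * exp (\<eta> * f k s b)))"
    by (simp add: j)
  also have "\<dots> = (\<lambda>a. WW \<eta> A f s k a / ZZ \<eta> A f s k * exp (\<eta> * f k s a) / (ZZ \<eta> A f s (Suc k) / ZZ \<eta> A f s k))"
    unfolding N unfolding IH ..
  also have "\<dots> = (\<lambda>a. (WW \<eta> A f s k a * exp (\<eta> * f k s a)) / ZZ \<eta> A f s (Suc k))"
    using Zk ZS by (simp add: fun_eq_iff field_simps)
  also have "\<dots> = (\<lambda>a. WW \<eta> A f s (Suc k) a / ZZ \<eta> A f s (Suc k))"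
    using Suc.hyps by (simp add: WW_Suc)
  finally show "pspi \<eta> A f (Suc k) s = (\<lambda>a. WW \<eta> A f s (Suc k) a / ZZ \<eta> A f s (Suc k))" .
  qed
qed

lemma pspi_closed: "k \<in> {1..K} \<Longrightarrow> pspi \<eta> A f k s = (\<lambda>a. WW \<eta> A f s k a / ZZ \<eta> A f s k)"
  using pspi_closed_aux by auto

lemma hoeff:
  assumes eta_pos: "0 < \<eta>" and k: "k \<in> {1..K}"
  shows "ln (ZZ \<eta> A f s (Suc k) / ZZ \<eta> A f s k)
     \<le> \<eta> * (LINT a|lborel. pspi \<eta> A f k s a * f k s a) + \<eta>\<^sup>2 * V\<^sup>2 / 8"
proof -
  define Z where "Z = ZZ \<eta> A f s k"
  define w where "w = (\<lambda>a. WW \<eta> A f s k a / Z)"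
  have kK: "k \<le> Suc K" using k by auto
  have Zpos: "0 < Z" unfolding Z_def using ZZ_pos kK by auto
  have pw: "pspi \<eta> A f k s = w" unfolding w_def Z_def using pspi_closed[OF k] .
  have wm[measurable]: "w \<in> borel_measurable lborel" unfolding w_def using WW_meas[OF kK] by measurable
  have hm[measurable]: "f k s \<in> borel_measurable lborel" using hmeas k by auto
  have wnn: "0 \<le> w x" for x unfolding w_def using Zpos
    by (intro divide_nonneg_pos) (auto simp: WW_def)
  have wint: "integrable lborel w" unfolding w_def using WW_int[OF kK] by simp
  have w1: "(LINT x|lborel. w x) = 1" unfolding w_def Z_def ZZ_def using ZZ_pos[OF kK] by (simp add: ZZ_def)
  define N where "N = density lborel (\<lambda>x. ennreal (w x))"
  have Nprob: "prob_space N" unfolding N_def using wm wnn wint w1 by (rule prob_space_density_real)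
  have wA: "0 < w x \<Longrightarrow> x \<in> A" for x unfolding w_def WW_def by (cases "x \<in> A") auto
  interpret X: interval_bounded_random_variable N "f k s" 0 V
  proof (intro interval_bounded_random_variable.intro interval_bounded_random_variable_axioms.intro Nprob)
    have "f k s \<in> borel_measurable (density lborel (\<lambda>x. ennreal (w x)))" by simp
    then show "f k s \<in> borel_measurable N" by (simp add: N_def)
    show "AE x in N. f k s x \<in> {0..V}" unfolding N_def
      apply (subst AE_density) apply simp
      apply (rule AE_I2) using wA hrng k by auto
  qed
  define E where "E = X.expectation (f k s)"
  have E: "E = (LINT a|lborel. w a * f k s a)" unfolding E_def N_def
    by (subst integral_density) (auto simp: wnn)
  have H: "(\<integral>\<^sup>+x. exp (\<eta> * (f k s x - E)) \<partial>N) \<le> ennreal (exp (\<eta>\<^sup>2 * V\<^sup>2 / 8))"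
    using X.Hoeffdings_lemma_nn_integral[OF eta_pos] unfolding E_def by simp
  have eqf: "w x * exp (\<eta> * (f k s x - E)) = WW \<eta> A f s (Suc k) x / Z * exp (- \<eta> * E)" for x
    using k by (simp add: w_def WW_Suc[symmetric] right_diff_distrib exp_diff exp_minus field_simps)
  have int2: "integrable lborel (\<lambda>x. w x * exp (\<eta> * (f k s x - E)))"
    unfolding eqf using WW_int[of "Suc k"] k by auto
  have "(\<integral>\<^sup>+x. exp (\<eta> * (f k s x - E)) \<partial>N) = (\<integral>\<^sup>+x. ennreal (w x) * ennreal (exp (\<eta> * (f k s x - E))) \<partial>lborel)"
    unfolding N_def by (subst nn_integral_density) auto
  also have "\<dots> = (\<integral>\<^sup>+x. ennreal (w x * exp (\<eta> * (f k s x - E))) \<partial>lborel)"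
    using wnn by (simp add: ennreal_mult)
  also have "\<dots> = ennreal (LINT x|lborel. w x * exp (\<eta> * (f k s x - E)))"
    using int2 wnn by (intro nn_integral_eq_integral) auto
  also have "(LINT x|lborel. w x * exp (\<eta> * (f k s x - E))) = ZZ \<eta> A f s (Suc k) / Z * exp (- \<eta> * E)"
    unfolding eqf by (simp add: ZZ_def)
  finally have "ennreal (ZZ \<eta> A f s (Suc k) / Z * exp (- \<eta> * E)) \<le> ennreal (exp (\<eta>\<^sup>2 * V\<^sup>2 / 8))"
    using H by simp
  then have le: "ZZ \<eta> A f s (Suc k) / Z * exp (- \<eta> * E) \<le> exp (\<eta>\<^sup>2 * V\<^sup>2 / 8)"
    by (simp add: ennreal_le_iff)
  have qpos: "0 < ZZ \<eta> A f s (Suc k) / Z" using ZZ_pos[of "Suc k"] k Zpos by auto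
  have "ln (ZZ \<eta> A f s (Suc k) / Z) + (- \<eta> * E) = ln (ZZ \<eta> A f s (Suc k) / Z * exp (- \<eta> * E))"
    using ln_mult[of "ZZ \<eta> A f s (Suc k) / Z" "exp (- \<eta> * E)"] qpos Zpos ZZ_pos[of "Suc k"] k by simp
  also have "\<dots> \<le> \<eta>\<^sup>2 * V\<^sup>2 / 8"
  proof -
    have "ln (ZZ \<eta> A f s (Suc k) / Z * exp (- \<eta> * E)) \<le> ln (exp (\<eta>\<^sup>2 * V\<^sup>2 / 8))"
      using le qpos Zpos ZZ_pos[of "Suc k"] k by (subst ln_le_cancel_iff) auto
    then show ?thesis by simp
  qed
  finally show ?thesis unfolding pw E Z_def by simp
qed

lemma lower:
  assumes a0: "a0 \<in> A" and e: "0 < \<epsilon>" "\<epsilon> \<le> 1"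
  shows "\<epsilon> ^ CARD('m) * measure lborel A * exp (\<eta> * (SS f s (Suc K) a0 - real K * L * \<epsilon> * diameter A))
     \<le> ZZ \<eta> A f s (Suc K)"
proof -
  define T where "T = (\<lambda>x. \<epsilon> *\<^sub>R x + (1 - \<epsilon>) *\<^sub>R a0) ` A"
  define c where "c = exp (\<eta> * (SS f s (Suc K) a0 - real K * L * \<epsilon> * diameter A))"
  have TA: "T \<subseteq> A" unfolding T_def using A_convex a0 e by (auto simp: convex_def)
  have Tc: "compact T" unfolding T_def
    by (intro compact_continuous_image A_compact continuous_intros)
  then have Ts: "T \<in> sets lborel" by (simp add: compact_imp_closed borel_closed)
  have "measure lebesgue T = \<bar>\<epsilon>\<bar> ^ DIM(real^'m) * measure lebesgue A"
    unfolding T_def by (rule measure_lebesgue_affine)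
  then have mT: "measure lborel T = \<epsilon> ^ CARD('m) * measure lborel A"
    using Ts A_sets e by simp
  have Tfin: "emeasure lborel T < \<infinity>"
    using emeasure_mono[OF TA A_sets] A_fin by auto
  have bnd: "c * indicator T b \<le> WW \<eta> A f s (Suc K) b" for b
  proof (cases "b \<in> T")
    case False then show ?thesis by (simp add: WW_def)
  next
    case True
    then obtain x where x: "x \<in> A" and b: "b = \<epsilon> *\<^sub>R x + (1 - \<epsilon>) *\<^sub>R a0" unfolding T_def by auto
    have bA: "b \<in> A" using True TA by auto
    have "dist b a0 = norm (\<epsilon> *\<^sub>R (x - a0))" unfolding b dist_norm by (simp add: algebra_simps)
    also have "\<dots> = \<epsilon> * dist x a0" using e by (simp add: dist_norm)
    also have "\<dots> \<le> \<epsilon> * diameter A"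
      using e x a0 A_compact by (intro mult_left_mono diameter_bounded_bound compact_imp_bounded) auto
    finally have db: "dist b a0 \<le> \<epsilon> * diameter A" .
    have each: "f j s a0 - L * \<epsilon> * diameter A \<le> f j s b" if j: "j \<in> {1..<Suc K}" for j
    proof -
      have lj: "L-lipschitz_on A (f j s)" using hlip j by auto
      then have L0: "0 \<le> L" by (rule lipschitz_on_nonneg)
      have "dist (f j s a0) (f j s b) \<le> L * dist a0 b" using lj a0 bA by (rule lipschitz_onD)
      also have "\<dots> \<le> L * (\<epsilon> * diameter A)" using db L0 by (simp add: dist_commute mult_left_mono)
      finally show ?thesis by (simp add: dist_real_def)
    qed
    have "SS f s (Suc K) a0 - real K * L * \<epsilon> * diameter A = (\<Sum>j\<in>{1..<Suc K}. f j s a0 - L * \<epsilon> * diameter A)"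
      by (simp add: SS_def sum_subtractf)
    also have "\<dots> \<le> SS f s (Suc K) b" unfolding SS_def by (intro sum_mono each)
    finally have "c \<le> exp (\<eta> * SS f s (Suc K) b)" unfolding c_def using eta by (simp add: mult_left_mono)
    then show ?thesis using True bA by (simp add: WW_def)
  qed
  have "c * measure lborel T = (LINT b|lborel. c * indicator T b)"
    using Ts Tfin by simp
  also have "\<dots> \<le> ZZ \<eta> A f s (Suc K)" unfolding ZZ_def
    using WW_int[of "Suc K"] Ts Tfin bnd by (intro integral_mono) auto
  finally show ?thesis unfolding mT c_def by (simp add: ac_simps)
qed

lemma pspi_dens:
  assumes k: "k \<in> {1..K}"
  shows "pspi \<eta> A f k s \<in> borel_measurable lborel" "\<And>a. 0 \<le> pspi \<eta> A f k s a"
    "\<And>a. a \<notin> A \<Longrightarrow> pspi \<eta> A f k s a = 0" "integrable lborel (pspi \<eta> A f k s)"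
    "(LINT a|lborel. pspi \<eta> A f k s a) = 1"
proof -
  have kK: "k \<le> Suc K" using k by auto
  note pc = pspi_closed[OF k]
  have Zp: "0 < ZZ \<eta> A f s k" using ZZ_pos[OF kK] .
  show "pspi \<eta> A f k s \<in> borel_measurable lborel" unfolding pc using WW_meas[OF kK] by measurable
  show "0 \<le> pspi \<eta> A f k s a" for a unfolding pc using Zp by (simp add: WW_def)
  show "a \<notin> A \<Longrightarrow> pspi \<eta> A f k s a = 0" for a unfolding pc by (simp add: WW_def)
  show "integrable lborel (pspi \<eta> A f k s)" unfolding pc using WW_int[OF kK] by simp
  show "(LINT a|lborel. pspi \<eta> A f k s a) = 1" unfolding pc using Zp by (simp add: ZZ_def)
qed

lemma regret_point:
  assumes eta_pos: "0 < \<eta>" and a0: "a0 \<in> A" and e: "0 < \<epsilon>" "\<epsilon> \<le> 1"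
  shows "SS f s (Suc K) a0 - (\<Sum>k=1..K. LINT a|lborel. pspi \<eta> A f k s a * f k s a)
     \<le> - real CARD('m) * ln \<epsilon> / \<eta> + real K * \<eta> * V\<^sup>2 / 8 + real K * L * \<epsilon> * diameter A"
proof -
  define E where "E = (\<Sum>k=1..K. LINT a|lborel. pspi \<eta> A f k s a * f k s a)"
  define X where "X = SS f s (Suc K) a0"
  define c where "c = exp (\<eta> * (X - real K * L * \<epsilon> * diameter A))"
  have Zp: "k \<le> Suc K \<Longrightarrow> 0 < ZZ \<eta> A f s k" for k by (rule ZZ_pos)
  have "ln (ZZ \<eta> A f s (Suc K)) - ln (ZZ \<eta> A f s 1) = (\<Sum>k=1..K. ln (ZZ \<eta> A f s (Suc k)) - ln (ZZ \<eta> A f s k))"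
    by (rule sum_Suc_diff[symmetric]) simp
  also have "\<dots> = (\<Sum>k=1..K. ln (ZZ \<eta> A f s (Suc k) / ZZ \<eta> A f s k))"
    apply (intro sum.cong refl)
    subgoal for k using Zp[of k] Zp[of "Suc k"] by (simp add: ln_div)
    done
  also have "\<dots> \<le> (\<Sum>k=1..K. \<eta> * (LINT a|lborel. pspi \<eta> A f k s a * f k s a) + \<eta>\<^sup>2 * V\<^sup>2 / 8)"
    by (intro sum_mono hoeff eta_pos) auto
  also have "\<dots> = \<eta> * E + real K * (\<eta>\<^sup>2 * V\<^sup>2 / 8)"
    by (simp add: E_def sum.distrib sum_distrib_left)
  finally have up: "ln (ZZ \<eta> A f s (Suc K)) - ln (measure lborel A) \<le> \<eta> * E + real K * (\<eta>\<^sup>2 * V\<^sup>2 / 8)"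
    using ZZ_1 by simp
  have lo0: "\<epsilon> ^ CARD('m) * measure lborel A * c \<le> ZZ \<eta> A f s (Suc K)"
    unfolding c_def X_def by (rule lower[OF a0 e])
  have pos: "0 < \<epsilon> ^ CARD('m) * measure lborel A * c" using e muA_pos by (simp add: c_def)
  have "ln (\<epsilon> ^ CARD('m) * measure lborel A * c) \<le> ln (ZZ \<eta> A f s (Suc K))"
    using lo0 pos by (subst ln_le_cancel_iff) auto
  moreover have "ln (\<epsilon> ^ CARD('m) * measure lborel A * c) = real CARD('m) * ln \<epsilon> + ln (measure lborel A) + \<eta> * (X - real K * L * \<epsilon> * diameter A)"
    using e muA_pos by (simp add: ln_mult ln_realpow c_def)
  ultimately have key: "real CARD('m) * ln \<epsilon> + \<eta> * (X - real K * L * \<epsilon> * diameter A) \<le> \<eta> * E + real K * (\<eta>\<^sup>2 * V\<^sup>2 / 8)"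
    using up by linarith
  have r: "\<eta> * (- real CARD('m) * ln \<epsilon> / \<eta> + real K * \<eta> * V\<^sup>2 / 8 + real K * L * \<epsilon> * diameter A)
     = - real CARD('m) * ln \<epsilon> + real K * (\<eta>\<^sup>2 * V\<^sup>2 / 8) + \<eta> * (real K * L * \<epsilon> * diameter A)"
    using eta_pos by (simp add: field_simps power2_eq_square)
  have "\<eta> * (X - E) \<le> - real CARD('m) * ln \<epsilon> + real K * (\<eta>\<^sup>2 * V\<^sup>2 / 8) + \<eta> * (real K * L * \<epsilon> * diameter A)"
    using key by (simp add: right_diff_distrib)
  then have "\<eta> * (X - E) \<le> \<eta> * (- real CARD('m) * ln \<epsilon> / \<eta> + real K * \<eta> * V\<^sup>2 / 8 + real K * L * \<epsilon> * diameter A)"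
    unfolding r .
  then show ?thesis unfolding E_def[symmetric] X_def[symmetric] using eta_pos by simp
qed

lemma regret_dist:
  fixes p :: "real^'m \<Rightarrow> real"
  assumes eta_pos: "0 < \<eta>" and e: "0 < \<epsilon>" "\<epsilon> \<le> 1"
    and pm: "p \<in> borel_measurable lborel" and pnn: "\<And>a. 0 \<le> p a" and pA: "\<And>a. a \<notin> A \<Longrightarrow> p a = 0"
    and pint: "integrable lborel p" and p1: "(LINT a|lborel. p a) = 1"
  shows "(\<Sum>k=1..K. (LINT a|lborel. p a * f k s a) - (LINT a|lborel. pspi \<eta> A f k s a * f k s a))
     \<le> - real CARD('m) * ln \<epsilon> / \<eta> + real K * \<eta> * V\<^sup>2 / 8 + real K * L * \<epsilon> * diameter A"
proof -
  define E where "E = (\<Sum>k=1..K. LINT a|lborel. pspi \<eta> A f k s a * f k s a)"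
  define C where "C = - real CARD('m) * ln \<epsilon> / \<eta> + real K * \<eta> * V\<^sup>2 / 8 + real K * L * \<epsilon> * diameter A"
  have pk: "integrable lborel (\<lambda>a. p a * f k s a)" if k: "k \<in> {1..K}" for k
  proof (rule Bochner_Integration.integrable_bound[of lborel "\<lambda>a. V * p a"])
    show "integrable lborel (\<lambda>a. V * p a)" using pint by simp
    show "(\<lambda>a. p a * f k s a) \<in> borel_measurable lborel" using pm hmeas[OF k] by measurable
    show "AE a in lborel. norm (p a * f k s a) \<le> norm (V * p a)"
    proof (rule AE_I2)
      fix a show "norm (p a * f k s a) \<le> norm (V * p a)"
      proof (cases "a \<in> A")
        case True
        have "p a * f k s a \<le> p a * V" using hrng[OF k True] pnn[of a] by (intro mult_left_mono) auto
        then show ?thesis using hrng[OF k True] pnn[of a] V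
          by (simp add: abs_mult mult.commute)
      qed (simp add: pA)
    qed
  qed
  have "(\<Sum>k=1..K. LINT a|lborel. p a * f k s a) = (LINT a|lborel. (\<Sum>k=1..K. p a * f k s a))"
    by (subst Bochner_Integration.integral_sum) (use pk in auto)
  also have "\<dots> = (LINT a|lborel. p a * SS f s (Suc K) a)"
    by (simp add: SS_def sum_distrib_left atLeastLessThanSuc_atLeastAtMost)
  also have "\<dots> \<le> (LINT a|lborel. p a * (E + C))"
  proof (rule integral_mono)
    show "integrable lborel (\<lambda>a. p a * SS f s (Suc K) a)"
      unfolding SS_def sum_distrib_left atLeastLessThanSuc_atLeastAtMost using pk by auto
    show "integrable lborel (\<lambda>a. p a * (E + C))" using pint by simp
    fix a show "p a * SS f s (Suc K) a \<le> p a * (E + C)"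
    proof (cases "a \<in> A")
      case True
      then have "SS f s (Suc K) a \<le> E + C"
        using regret_point[OF eta_pos True e] unfolding E_def C_def by simp
      then show ?thesis using pnn[of a] by (rule mult_left_mono)
    qed (simp add: pA)
  qed
  also have "\<dots> = E + C" using p1 by simp
  finally show ?thesis unfolding E_def C_def by (simp add: sum_subtractf)
qed

end

lemma per_state:
  fixes A :: "(real^'m) set" and f :: "nat \<Rightarrow> 's \<Rightarrow> real^'m \<Rightarrow> real" and p :: "real^'m \<Rightarrow> real"
  assumes V: "0 < V" and K: "1 \<le> K"
    and A_convex: "convex A" and A_compact: "compact A"
    and A_pos: "0 < emeasure lborel A" and A_fin: "emeasure lborel A < \<infinity>"
    and hmeas: "\<And>j. j \<in> {1..K} \<Longrightarrow> f j s \<in> borel_measurable lborel"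
    and hrng: "\<And>j a. j \<in> {1..K} \<Longrightarrow> a \<in> A \<Longrightarrow> 0 \<le> f j s a \<and> f j s a \<le> V"
    and hlip: "\<And>j. j \<in> {1..K} \<Longrightarrow> L-lipschitz_on A (f j s)"
    and pm: "p \<in> borel_measurable lborel" and pnn: "\<And>a. 0 \<le> p a" and pA: "\<And>a. a \<notin> A \<Longrightarrow> p a = 0"
    and pint: "integrable lborel p" and p1: "(LINT a|lborel. p a) = 1"
  shows "(\<Sum>k=1..K. (LINT a|lborel. p a * f k s a) -
            (LINT a|lborel. pspi (sqrt (8 * real CARD('m) * ln (real K) / (real K * V\<^sup>2))) A f k s a * f k s a))
     \<le> real K * (V * sqrt (real CARD('m) * ln (real K) / (2 * real K))) + L * diameter A"
proof (cases "K = 1")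
  case True
  define G where "G = (LINT a|lborel. p a * f 1 s a) - (LINT a|lborel. pspi 0 A f 1 s a * f 1 s a)"
  have "G \<le> L * diameter A + e" if e: "0 < e" for e
  proof -
    define \<eta> where "\<eta> = 8 * e / V\<^sup>2"
    have eta: "0 < \<eta>" unfolding \<eta>_def using e V by simp
    have "(\<Sum>k=1..K. (LINT a|lborel. p a * f k s a) - (LINT a|lborel. pspi \<eta> A f k s a * f k s a))
       \<le> - real CARD('m) * ln 1 / \<eta> + real K * \<eta> * V\<^sup>2 / 8 + real K * L * 1 * diameter A"
      using V A_convex A_compact A_pos A_fin hmeas hrng hlip eta pm pnn pA pint p1
      by (intro regret_dist) auto
    then show ?thesis using True V unfolding G_def \<eta>_def by simp
  qed
  then have "G \<le> L * diameter A" by (rule field_le_epsilon)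
  then show ?thesis using True unfolding G_def by simp
next
  case False
  then have K2: "2 \<le> K" using K by simp
  define m where "m = real CARD('m)"
  define q where "q = m * ln (real K)"
  define r where "r = sqrt (q / (2 * real K))"
  have m1: "1 \<le> m" unfolding m_def by simp
  have lnK: "0 < ln (real K)" using K2 by simp
  have q: "0 < q" unfolding q_def using m1 lnK by simp
  have r: "0 < r" unfolding r_def using q K by simp
  have r2: "r\<^sup>2 = q / (2 * real K)" unfolding r_def using q K by simp
  have "8 * m * ln (real K) / (real K * V\<^sup>2) = (4 * r / V)\<^sup>2"
    using r2 V K unfolding q_def by (simp add: field_simps power2_eq_square)
  then have eta: "sqrt (8 * m * ln (real K) / (real K * V\<^sup>2)) = 4 * r / V"
    using r V by simp
  have etapos: "0 < 4 * r / V" using r V by simp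
  have e: "0 < 1 / real K" "1 / real K \<le> (1::real)" using K by auto
  have "(\<Sum>k=1..K. (LINT a|lborel. p a * f k s a) - (LINT a|lborel. pspi (4 * r / V) A f k s a * f k s a))
       \<le> - m * ln (1 / real K) / (4 * r / V) + real K * (4 * r / V) * V\<^sup>2 / 8 + real K * L * (1 / real K) * diameter A"
    unfolding m_def
    using V A_convex A_compact A_pos A_fin hmeas hrng hlip etapos e pm pnn pA pint p1
    by (intro regret_dist) auto
  also have "\<dots> = real K * (V * r) + L * diameter A"
  proof -
    have "- m * ln (1 / real K) = q" unfolding q_def using K by (simp add: ln_div)
    moreover have "q = 2 * real K * r\<^sup>2" using r2 K by simp
    ultimately have "- m * ln (1 / real K) = 2 * real K * r\<^sup>2" by simp
    then show ?thesis using r V K by (simp add: field_simps power2_eq_square)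
  qed
  finally show ?thesis unfolding eta[unfolded m_def] r_def q_def m_def .
qed



lemma pspi_meas:
  fixes A :: "'a::euclidean_space set" and f :: "nat \<Rightarrow> 's \<Rightarrow> 'a \<Rightarrow> real"
  assumes A[measurable]: "A \<in> sets borel"
    and fm: "\<And>j. j \<in> {1..K} \<Longrightarrow> (\<lambda>(s, a). f j s a) \<in> borel_measurable (M \<Otimes>\<^sub>M lborel)"
  shows "k \<le> K \<Longrightarrow> (\<lambda>(s, a). pspi \<eta> A f k s a) \<in> borel_measurable (M \<Otimes>\<^sub>M lborel)"
proof -
  have "Suc j \<le> K \<longrightarrow> (\<lambda>(s, a). pspi \<eta> A f (Suc j) s a) \<in> borel_measurable (M \<Otimes>\<^sub>M lborel)" for j
  proof (induction j)
    case 0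
    show ?case by simp measurable
  next
    case (Suc j)
    show ?case
    proof
      assume j: "Suc (Suc j) \<le> K"
      have IH[measurable]: "(\<lambda>(s, a). pspi \<eta> A f (Suc j) s a) \<in> borel_measurable (M \<Otimes>\<^sub>M lborel)"
        using Suc j by simp
      have fj[measurable]: "(\<lambda>(s, a). f (Suc j) s a) \<in> borel_measurable (M \<Otimes>\<^sub>M lborel)"
        using fm j by simp
      have I[measurable]: "(\<lambda>s. LINT b|lborel. pspi \<eta> A f (Suc j) s b * exp (\<eta> * f (Suc j) s b)) \<in> borel_measurable M"
        by (rule lborel.borel_measurable_lebesgue_integral) measurable
      show "(\<lambda>(s, a). pspi \<eta> A f (Suc (Suc j)) s a) \<in> borel_measurable (M \<Otimes>\<^sub>M lborel)"
        by simp measurable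
    qed
  qed
  moreover have "(\<lambda>(s, a). pspi \<eta> A f 0 s a) \<in> borel_measurable (M \<Otimes>\<^sub>M lborel)"
    by simp measurable
  ultimately show "k \<le> K \<Longrightarrow> ?thesis" by (cases k) auto
qed

lemma subprob_int:
  fixes g :: "'s \<Rightarrow> real"
  assumes mu: "\<mu> \<in> space (subprob_algebra M)" and gm: "g \<in> borel_measurable M"
    and gb: "\<And>s. s \<in> space M \<Longrightarrow> \<bar>g s\<bar> \<le> B" and B: "0 \<le> B"
  shows "integrable \<mu> g" "\<bar>integral\<^sup>L \<mu> g\<bar> \<le> B"
proof -
  have sp0: "subprob_space \<mu>" using mu by (simp add: space_subprob_algebra)
  have fm0: "finite_measure \<mu>" using sp0 by (simp add: subprob_space_def)
  have sets: "sets \<mu> = sets M" using mu by (simp add: space_subprob_algebra)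
  then have sp: "space \<mu> = space M" by (rule sets_eq_imp_space_eq)
  have gm': "g \<in> borel_measurable \<mu>" unfolding measurable_cong_sets[OF sets refl] by (rule gm)
  have ae: "AE x in \<mu>. norm (g x) \<le> B"
    by (rule AE_I2) (simp add: gb sp)
  show gi: "integrable \<mu> g"
    using finite_measure.integrable_const_bound[OF fm0 ae gm'] .
  have gi': "integrable \<mu> (\<lambda>s. \<bar>g s\<bar>)" using gi by simp
  have ci: "integrable \<mu> (\<lambda>s. B)"
    by (rule finite_measure.integrable_const[OF fm0])
  have "\<bar>integral\<^sup>L \<mu> g\<bar> \<le> integral\<^sup>L \<mu> (\<lambda>s. \<bar>g s\<bar>)"
    using integral_norm_bound[of \<mu> g] by simp
  also have "\<dots> \<le> integral\<^sup>L \<mu> (\<lambda>s. B)"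
    by (rule integral_mono[OF gi' ci]) (simp add: gb sp)
  also have "\<dots> = B * measure \<mu> (space \<mu>)" by simp
  also have "\<dots> \<le> B * 1" by (intro mult_left_mono) (simp_all add: B subprob_space.subprob_measure_le_1[OF sp0])
  finally show "\<bar>integral\<^sup>L \<mu> g\<bar> \<le> B" by simp
qed

lemma subprob_int_le:
  fixes g :: "'s \<Rightarrow> real"
  assumes mu: "\<mu> \<in> space (subprob_algebra M)" and gi: "integrable \<mu> g"
    and gC: "\<And>s. s \<in> space M \<Longrightarrow> g s \<le> C" and C: "0 \<le> C"
  shows "integral\<^sup>L \<mu> g \<le> C"
proof -
  have sp0: "subprob_space \<mu>" using mu by (simp add: space_subprob_algebra)
  have fm0: "finite_measure \<mu>" using sp0 by (simp add: subprob_space_def)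
  have sets: "sets \<mu> = sets M" using mu by (simp add: space_subprob_algebra)
  then have sp: "space \<mu> = space M" by (rule sets_eq_imp_space_eq)
  have ci: "integrable \<mu> (\<lambda>s. C)"
    by (rule finite_measure.integrable_const[OF fm0])
  have "integral\<^sup>L \<mu> g \<le> integral\<^sup>L \<mu> (\<lambda>s. C)"
    by (rule integral_mono[OF gi ci]) (simp add: gC sp)
  also have "\<dots> = C * measure \<mu> (space \<mu>)" by simp
  also have "\<dots> \<le> C * 1" by (intro mult_left_mono) (simp_all add: C subprob_space.subprob_measure_le_1[OF sp0])
  finally show ?thesis by simp
qed

theorem theoremB1:
  fixes M :: "'s measure"
    and mu0 :: "'s measure"
    and P :: "'s \<Rightarrow> real^'m \<Rightarrow> 's measure"
    and \<gamma> Rmax Vmax L :: real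
    and A :: "(real^'m) set"
    and F :: "('s \<Rightarrow> real^'m \<Rightarrow> real) set"
    and f :: "nat \<Rightarrow> 's \<Rightarrow> real^'m \<Rightarrow> real"
    and pcp :: "'s \<Rightarrow> real^'m \<Rightarrow> real"
    and K :: nat
  assumes gamma: "0 \<le> \<gamma>" "\<gamma> < 1"
    and Rmax: "0 < Rmax"
    and Vmax: "Vmax = Rmax / (1 - \<gamma>)"
    and mu0: "mu0 \<in> space (prob_algebra M)"
    and P_kernel: "(\<lambda>(s, a). P s a) \<in> M \<Otimes>\<^sub>M lborel \<rightarrow>\<^sub>M prob_algebra M"
    and A_convex: "convex A" and A_compact: "compact A"
    and A_pos: "0 < emeasure lborel A" and A_fin: "emeasure lborel A < \<infinity>"
    and F_range: "\<And>g s a. g \<in> F \<Longrightarrow> s \<in> space M \<Longrightarrow> a \<in> A \<Longrightarrow> 0 \<le> g s a \<and> g s a \<le> Vmax"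
    and F_meas: "\<And>g. g \<in> F \<Longrightarrow> (\<lambda>(s, a). g s a) \<in> borel_measurable (M \<Otimes>\<^sub>M lborel)"
    and f_in_F: "\<And>k. k \<in> {1..K} \<Longrightarrow> f k \<in> F"
    and f_lip: "\<And>k s. k \<in> {1..K} \<Longrightarrow> s \<in> space M \<Longrightarrow> L-lipschitz_on A (f k s)"
    and pcp_meas: "(\<lambda>(s, a). pcp s a) \<in> borel_measurable (M \<Otimes>\<^sub>M lborel)"
    and pcp_nonneg: "\<And>s a. 0 \<le> pcp s a"
    and pcp_supp: "\<And>s a. a \<notin> A \<Longrightarrow> pcp s a = 0"
    and pcp_int: "\<And>s. s \<in> space M \<Longrightarrow> integrable lborel (pcp s) \<and> (LINT a|lborel. pcp s a) = 1"
    and K: "1 \<le> K"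
  shows "(let m = real CARD('m);
              \<eta> = sqrt (8 * m * ln (real K) / (real K * Vmax\<^sup>2));
              Reg = (\<Sum>k = 1..K. occ_expect \<gamma> mu0 P pcp
                        (\<lambda>s. pol_val (f k) pcp s - pol_val (f k) (pspi \<eta> A f k) s))
          in Reg / real K \<le> Vmax * sqrt (m * ln (real K) / (2 * real K)) + L * diameter A / real K)"
proof -
  define m where "m = real CARD('m)"
  define \<eta>0 where "\<eta>0 = sqrt (8 * m * ln (real K) / (real K * Vmax\<^sup>2))"
  define r where "r = sqrt (m * ln (real K) / (2 * real K))"
  define C where "C = real K * (Vmax * r) + L * diameter A"
  define g where "g k s = pol_val (f k) pcp s - pol_val (f k) (pspi \<eta>0 A f k) s" for k s
  have Vpos: "0 < Vmax" unfolding Vmax using Rmax gamma by simp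
  have A_sets[measurable]: "A \<in> sets borel" using A_compact by (simp add: compact_imp_closed borel_closed)
  have eta0: "0 \<le> \<eta>0" unfolding \<eta>0_def m_def using K
    by (intro real_sqrt_ge_zero divide_nonneg_nonneg mult_nonneg_nonneg) auto
  have fjm: "(\<lambda>(s, a). f j s a) \<in> borel_measurable (M \<Otimes>\<^sub>M lborel)" if "j \<in> {1..K}" for j
    using F_meas f_in_F that by blast
  have fsm: "f j s \<in> borel_measurable lborel" if "j \<in> {1..K}" "s \<in> space M" for j s
    using measurable_Pair2[OF fjm[OF that(1)] that(2)] by simp
  have pcpm: "pcp s \<in> borel_measurable lborel" if "s \<in> space M" for s
    using measurable_Pair2[OF pcp_meas that] by simp
  have frng: "0 \<le> f j s a \<and> f j s a \<le> Vmax" if "j \<in> {1..K}" "s \<in> space M" "a \<in> A" for j s a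
    using F_range[OF f_in_F[OF that(1)] that(2,3)] .
  have C0: "0 \<le> C"
  proof -
    have L0: "0 \<le> L"
    proof (cases "space M = {}")
      case True
      have pm0: "prob_space mu0" and sm0: "sets mu0 = sets M" using mu0 by (auto simp: space_prob_algebra)
      have "space mu0 \<noteq> {}" by (rule prob_space.not_empty[OF pm0])
      moreover have "space mu0 = space M" by (rule sets_eq_imp_space_eq[OF sm0])
      ultimately have "space M \<noteq> {}" by simp
      then show ?thesis using True by blast
    next
      case False
      then obtain s where "s \<in> space M" by auto
      then have "L-lipschitz_on A (f 1 s)" using f_lip K by auto
      then show ?thesis by (rule lipschitz_on_nonneg)
    qed
    have "0 \<le> r" unfolding r_def m_def using K by simp
    then show ?thesis unfolding C_def using L0 Vpos A_compact
      by (intro add_nonneg_nonneg mult_nonneg_nonneg diameter_ge_0 compact_imp_bounded) auto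
  qed
  have Vnn: "0 \<le> Vmax" using Vpos by simp
  have per: "(\<Sum>k=1..K. g k s) \<le> C" if s: "s \<in> space M" for s
  proof -
    note ps = per_state[where f=f and s=s and p="pcp s" and A=A and K=K and V=Vmax and L=L, OF Vpos K A_convex A_compact A_pos A_fin fsm[OF _ s] frng[OF _ s] f_lip[OF _ s] pcpm[OF s]
        pcp_nonneg pcp_supp conjunct1[OF pcp_int[OF s]] conjunct2[OF pcp_int[OF s]]]
    show ?thesis unfolding g_def pol_val_def C_def r_def \<eta>0_def m_def by (rule ps)
  qed
  have pd: "pspi \<eta>0 A f k s \<in> borel_measurable lborel" "\<And>a. 0 \<le> pspi \<eta>0 A f k s a"
    "\<And>a. a \<notin> A \<Longrightarrow> pspi \<eta>0 A f k s a = 0" "integrable lborel (pspi \<eta>0 A f k s)"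
    "(LINT a|lborel. pspi \<eta>0 A f k s a) = 1" if s: "s \<in> space M" and k: "k \<in> {1..K}" for s k
    using pspi_dens[where \<eta>=\<eta>0 and V=Vmax and L=L and A=A and f=f and s=s and K=K,
        OF eta0 Vnn A_convex A_compact A_pos A_fin fsm[OF _ s] frng[OF _ s] f_lip[OF _ s] k] by auto
  have gb: "\<bar>g k s\<bar> \<le> Vmax" if k: "k \<in> {1..K}" and s: "s \<in> space M" for k s
  proof -
    note a0 = dens_bound[where w="pcp s" and h="f k s" and A=A and V=Vmax, OF pcpm[OF s] pcp_nonneg pcp_supp conjunct1[OF pcp_int[OF s]] conjunct2[OF pcp_int[OF s]]
        fsm[OF k s] frng[OF k s]]
    note b0 = dens_bound[where w="pspi \<eta>0 A f k s" and h="f k s" and A=A and V=Vmax, OF pd(1)[OF s k] pd(2)[OF s k] pd(3)[OF s k] pd(4)[OF s k] pd(5)[OF s k]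
        fsm[OF k s] frng[OF k s]]
    have a: "0 \<le> pol_val (f k) pcp s \<and> pol_val (f k) pcp s \<le> Vmax"
      unfolding pol_val_def using a0(2,3) by simp
    have b: "0 \<le> pol_val (f k) (pspi \<eta>0 A f k) s \<and> pol_val (f k) (pspi \<eta>0 A f k) s \<le> Vmax"
      unfolding pol_val_def using b0(2,3) by simp
    show ?thesis unfolding g_def using a b by linarith
  qed
  have gm: "g k \<in> borel_measurable M" if k: "k \<in> {1..K}" for k
  proof -
    have [measurable]: "(\<lambda>(s, a). f k s a) \<in> borel_measurable (M \<Otimes>\<^sub>M lborel)" using fjm[OF k] .
    have [measurable]: "(\<lambda>(s, a). pspi \<eta>0 A f k s a) \<in> borel_measurable (M \<Otimes>\<^sub>M lborel)"
      using k by (intro pspi_meas[where K=K] A_sets fjm) auto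
    have [measurable]: "(\<lambda>(s, a). pcp s a) \<in> borel_measurable (M \<Otimes>\<^sub>M lborel)" using pcp_meas .
    have 1: "(\<lambda>s. LINT a|lborel. pcp s a * f k s a) \<in> borel_measurable M"
      by (rule lborel.borel_measurable_lebesgue_integral) measurable
    have 2: "(\<lambda>s. LINT a|lborel. pspi \<eta>0 A f k s a * f k s a) \<in> borel_measurable M"
      by (rule lborel.borel_measurable_lebesgue_integral) measurable
    show ?thesis unfolding g_def[abs_def] pol_val_def using 1 2 by measurable
  qed
  define D where "D s = density lborel (\<lambda>a. ennreal (pcp s a))" for s
  have Dm: "D \<in> measurable M (subprob_algebra lborel)"
  proof (rule measurable_subprob_algebra)
    fix s assume s: "s \<in> space M"
    show "subprob_space (D s)" unfolding D_def
      using prob_space_density_real[OF pcpm[OF s] pcp_nonneg] pcp_int[OF s]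
      by (auto intro: prob_space_imp_subprob_space)
    show "sets (D s) = sets lborel" unfolding D_def by simp
  next
    fix X :: "(real^'m) set" assume X: "X \<in> sets lborel"
    have [measurable]: "(\<lambda>(s, a). pcp s a) \<in> borel_measurable (M \<Otimes>\<^sub>M lborel)" using pcp_meas .
    have Xb[measurable]: "X \<in> sets borel" using X by simp
    have nnm: "(\<lambda>s. \<integral>\<^sup>+a. ennreal (pcp s a) * indicator X a \<partial>lborel) \<in> borel_measurable M"
      by (intro lborel.borel_measurable_nn_integral) measurable
    have eq: "emeasure (D s) X = (\<integral>\<^sup>+a. ennreal (pcp s a) * indicator X a \<partial>lborel)" if s: "s \<in> space M" for s
      unfolding D_def using pcpm[OF s] X by (intro emeasure_density) simp_all
    have "(\<lambda>s. emeasure (D s) X) \<in> borel_measurable M \<longleftrightarrow> (\<lambda>s. \<integral>\<^sup>+a. ennreal (pcp s a) * indicator X a \<partial>lborel) \<in> borel_measurable M"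
      by (rule measurable_cong) (rule eq)
    then show "(\<lambda>s. emeasure (D s) X) \<in> borel_measurable M" using nnm by blast
  qed
  have Pm: "(\<lambda>(s, a). P s a) \<in> measurable (M \<Otimes>\<^sub>M lborel) (subprob_algebra M)"
    using P_kernel by (rule measurable_prob_algebraD)
  have Kern: "(\<lambda>s. D s \<bind> P s) \<in> measurable M (subprob_algebra M)"
    using measurable_bind'[OF Dm Pm] .
  have step: "(\<lambda>\<mu>. \<mu> \<bind> (\<lambda>s. D s \<bind> P s)) \<in> measurable (subprob_algebra M) (subprob_algebra M)"
    by (rule measurable_bind2[OF measurable_ident_sets[OF refl] Kern])
  have mu_t: "state_dist mu0 P pcp t \<in> space (subprob_algebra M)" for t
  proof (induction t)
    case 0
    have "prob_space mu0" "sets mu0 = sets M" using mu0 by (simp_all add: space_prob_algebra)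
    then show ?case by (simp add: space_subprob_algebra prob_space_imp_subprob_space)
  next
    case (Suc t)
    have "state_dist mu0 P pcp (Suc t) = state_dist mu0 P pcp t \<bind> (\<lambda>s. D s \<bind> P s)"
      by (simp add: D_def)
    then show ?case using measurable_space[OF step Suc] by simp
  qed
  define I where "I k t = integral\<^sup>L (state_dist mu0 P pcp t) (g k)" for k t
  have gi: "integrable (state_dist mu0 P pcp t) (g k)" and Ib: "\<bar>I k t\<bar> \<le> Vmax" if k: "k \<in> {1..K}" for k t
    using subprob_int[OF mu_t gm[OF k] gb[OF k]] Vpos unfolding I_def by auto
  have Isum: "(\<Sum>k=1..K. I k t) \<le> C" for t
  proof -
    have "(\<Sum>k=1..K. I k t) = integral\<^sup>L (state_dist mu0 P pcp t) (\<lambda>s. \<Sum>k=1..K. g k s)"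
      unfolding I_def by (subst Bochner_Integration.integral_sum) (use gi in auto)
    also have "\<dots> \<le> C"
      by (rule subprob_int_le[OF mu_t _ per C0]) (use gi in auto)
    finally show ?thesis .
  qed
  have gsum: "summable (\<lambda>t. \<gamma> ^ t * Vmax)" using gamma by (intro summable_mult2 summable_geometric) auto
  have sk: "summable (\<lambda>t. \<gamma> ^ t * I k t)" if k: "k \<in> {1..K}" for k
  proof (rule summable_comparison_test'[OF gsum])
    fix t show "norm (\<gamma> ^ t * I k t) \<le> \<gamma> ^ t * Vmax"
      using Ib[OF k, of t] gamma by (simp add: abs_mult mult_left_mono)
  qed
  have Reg: "(\<Sum>k = 1..K. occ_expect \<gamma> mu0 P pcp (g k)) \<le> C"
  proof -
    have e1: "(\<Sum>k = 1..K. occ_expect \<gamma> mu0 P pcp (g k)) = (1 - \<gamma>) * (\<Sum>k=1..K. \<Sum>t. \<gamma> ^ t * I k t)"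
      unfolding occ_expect_def I_def by (simp add: sum_distrib_left)
    have "(\<Sum>k=1..K. \<Sum>t. \<gamma> ^ t * I k t) = (\<Sum>t. \<Sum>k=1..K. \<gamma> ^ t * I k t)"
      by (rule suminf_sum[symmetric]) (use sk in auto)
    also have "\<dots> = (\<Sum>t. \<gamma> ^ t * (\<Sum>k=1..K. I k t))" by (simp add: sum_distrib_left)
    also have "\<dots> \<le> (\<Sum>t. \<gamma> ^ t * C)"
    proof (rule suminf_le)
      show "\<gamma> ^ t * (\<Sum>k=1..K. I k t) \<le> \<gamma> ^ t * C" for t using Isum[of t] gamma by (intro mult_left_mono) auto
      show "summable (\<lambda>t. \<gamma> ^ t * (\<Sum>k=1..K. I k t))"
        using summable_sum[of "{1..K}" "\<lambda>k t. \<gamma> ^ t * I k t"] sk by (simp add: sum_distrib_left)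
      show "summable (\<lambda>t. \<gamma> ^ t * C)" using gamma by (intro summable_mult2 summable_geometric) auto
    qed
    also have "\<dots> = (\<Sum>t. \<gamma> ^ t) * C"
      by (rule suminf_mult2[symmetric]) (use gamma in \<open>auto intro: summable_geometric\<close>)
    also have "(\<Sum>t. \<gamma> ^ t) = 1 / (1 - \<gamma>)"
      by (rule suminf_geometric) (use gamma in simp)
    finally have X: "(\<Sum>k=1..K. \<Sum>t. \<gamma> ^ t * I k t) \<le> 1 / (1 - \<gamma>) * C" .
    have "(1 - \<gamma>) * (\<Sum>k=1..K. \<Sum>t. \<gamma> ^ t * I k t) \<le> (1 - \<gamma>) * (1 / (1 - \<gamma>) * C)"
      using X gamma by (intro mult_left_mono) auto
    also have "(1 - \<gamma>) * (1 / (1 - \<gamma>) * C) = C" using gamma by simp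
    finally show ?thesis unfolding e1 .
  qed
  have "(\<Sum>k = 1..K. occ_expect \<gamma> mu0 P pcp (g k)) / real K \<le> Vmax * r + L * diameter A / real K"
    using Reg K unfolding C_def by (simp add: field_simps)
  then show ?thesis unfolding Let_def g_def[abs_def] \<eta>0_def r_def m_def .
qed

end
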